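(* Let $n\ge1$ and consider the $n\times3$ grid graph (vertices at the intersections of $n$ rows and $3$ columns, adjacent iff they are consecutive in the same row or the same column), with vertices ordered row-wise starting from the top row: the vertex in row $a$ and column $b$ receives label $3(a-1)+b$. Then this ordered grid is Generalized Bartlett, i.e., the row-wise ordering is a Generalized Bartlett ordering of the grid.
   Context: For a graph $(V,E)$ with $|V|=p$ and ordering $\sigma:V\to\{1,\dots,p\}$, set $E^\sigma_0=E$, $E^\sigma_i=E^\sigma_{i-1}\cup\{\{u,v\}:u\ne v,\sigma(u)>i,\sigma(v)>i,\{u,\sigma^{-1}(i)\},\{v,\sigma^{-1}(i)\}\in E^\sigma_{i-1}\}$ for $i=1,\dots,p-2$, and $D^\sigma(E)=E^\sigma_{p-2}$. $\sigma$ is a Generalized Bartlett ordering if there are no $u,v,w$ with $\{u,v\},\{v,w\},\{u,w\}\notin E$ but all three in $D^\sigma(E)$; the graph is Generalized Bartlett if such an ordering exists. *)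

theory Defs
  imports Main
begin

definition fill_step :: "'a set \<Rightarrow> ('a \<Rightarrow> nat) \<Rightarrow> 'a set set \<Rightarrow> nat \<Rightarrow> 'a set set" where
  "fill_step V \<sigma> E i = E \<union> {{u, v} | u v. u \<noteq> v \<and> \<sigma> u > i \<and> \<sigma> v > i \<and>
      (\<exists>w\<in>V. \<sigma> w = i \<and> {u, w} \<in> E \<and> {v, w} \<in> E)}"

fun fill_seq :: "'a set \<Rightarrow> ('a \<Rightarrow> nat) \<Rightarrow> 'a set set \<Rightarrow> nat \<Rightarrow> 'a set set" where
  "fill_seq V \<sigma> E 0 = E"
| "fill_seq V \<sigma> E (Suc i) = fill_step V \<sigma> (fill_seq V \<sigma> E i) (Suc i)"

definition D_fill :: "'a set \<Rightarrow> ('a \<Rightarrow> nat) \<Rightarrow> 'a set set \<Rightarrow> 'a set set" where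
  "D_fill V \<sigma> E = fill_seq V \<sigma> E (card V - 2)"

definition GB_ordering :: "'a set \<Rightarrow> 'a set set \<Rightarrow> ('a \<Rightarrow> nat) \<Rightarrow> bool" where
  "GB_ordering V E \<sigma> \<longleftrightarrow> bij_betw \<sigma> V {1..card V} \<and>
     \<not> (\<exists>u v w. {u, v} \<notin> E \<and> {v, w} \<notin> E \<and> {u, w} \<notin> E \<and>
          {u, v} \<in> D_fill V \<sigma> E \<and> {v, w} \<in> D_fill V \<sigma> E \<and> {u, w} \<in> D_fill V \<sigma> E)"

definition generalized_bartlett :: "'a set \<Rightarrow> 'a set set \<Rightarrow> bool" where
  "generalized_bartlett V E \<longleftrightarrow> (\<exists>\<sigma>. GB_ordering V E \<sigma>)"

definition grid_V :: "nat \<Rightarrow> (nat \<times> nat) set" where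
  "grid_V n = {1..n} \<times> {1..3}"

definition grid_E :: "nat \<Rightarrow> (nat \<times> nat) set set" where
  "grid_E n = {{(a, b), (a, b + 1)} | a b. 1 \<le> a \<and> a \<le> n \<and> 1 \<le> b \<and> b + 1 \<le> 3}
            \<union> {{(a, b), (a + 1, b)} | a b. 1 \<le> a \<and> a + 1 \<le> n \<and> 1 \<le> b \<and> b \<le> 3}"

definition rowwise :: "nat \<times> nat \<Rightarrow> nat" where
  "rowwise = (\<lambda>(a, b). 3 * (a - 1) + b)"

end

theory Submission
  imports Defs
begin

definition RE :: "nat \<Rightarrow> nat \<times> nat \<Rightarrow> nat \<times> nat \<Rightarrow> bool" where
  "RE n x y \<longleftrightarrow> 1 \<le> fst x \<and> fst x \<le> n \<and> 1 \<le> fst y \<and> fst y \<le> n \<and>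
     1 \<le> snd x \<and> snd x \<le> 3 \<and> 1 \<le> snd y \<and> snd y \<le> 3 \<and>
     ((fst y = fst x \<and> snd y = snd x + 1) \<or> (fst y = fst x + 1 \<and> snd y = snd x))"

definition RF :: "nat \<Rightarrow> nat \<times> nat \<Rightarrow> nat \<times> nat \<Rightarrow> bool" where
  "RF n x y \<longleftrightarrow> 1 \<le> fst x \<and> fst x \<le> n \<and> 1 \<le> fst y \<and> fst y \<le> n \<and>
     ((fst y = fst x + 1 \<and> ((snd x = 2 \<and> snd y = 1) \<or> (snd x = 3 \<and> snd y = 1) \<or> (snd x = 3 \<and> snd y = 2)))
      \<or> (fst y = fst x \<and> 2 \<le> fst x \<and> snd x = 1 \<and> snd y = 3))"

definition SE where "SE n x y \<longleftrightarrow> RE n x y \<or> RE n y x"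
definition SF where "SF n x y \<longleftrightarrow> RF n x y \<or> RF n y x"

lemma RE_E: assumes "RE n x y" shows "{x, y} \<in> grid_E n"
proof -
  obtain a b where x: "x = (a,b)" by force
  obtain c d where y: "y = (c,d)" by force
  have "(c = a \<and> d = b + 1 \<and> 1 \<le> a \<and> a \<le> n \<and> 1 \<le> b \<and> b + 1 \<le> 3) \<or>
        (c = a + 1 \<and> d = b \<and> 1 \<le> a \<and> a + 1 \<le> n \<and> 1 \<le> b \<and> b \<le> 3)"
    using assms unfolding x y RE_def by auto
  then show ?thesis unfolding x y grid_E_def by blast
qed

lemma E_mem: "{x, y} \<in> grid_E n \<longleftrightarrow> SE n x y"
proof
  assume "{x, y} \<in> grid_E n"
  then show "SE n x y" unfolding grid_E_def SE_def RE_def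
    by (auto simp: doubleton_eq_iff)
next
  assume "SE n x y"
  then show "{x, y} \<in> grid_E n" unfolding SE_def using RE_E[of n x y] RE_E[of n y x]
    by (auto simp: insert_commute)
qed

lemma up_nbrs:
  assumes "SE n (a,b) u \<or> SF n (a,b) u" "rowwise (a,b) < rowwise u"
  shows "1 \<le> a \<and> a \<le> n \<and> 1 \<le> b \<and> b \<le> 3 \<and>
    ((u = (a, b+1) \<and> b \<le> 2) \<or> (u = (a+1,b) \<and> a < n) \<or> (u = (a+1,1) \<and> b \<ge> 2 \<and> a < n)
     \<or> (u = (a+1,2) \<and> b = 3 \<and> a < n) \<or> (u = (a,3) \<and> b = 1 \<and> a \<ge> 2))"
proof -
  obtain c d where u: "u = (c, d)" by force
  from assms(1) show ?thesis using assms(2) unfolding u SE_def SF_def RE_def RF_def rowwise_def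
    apply (elim disjE conjE)
    by (simp_all)
qed

definition Gset :: "nat \<Rightarrow> (nat \<times> nat) set set" where
  "Gset n = {{x, y} | x y. SE n x y \<or> SF n x y}"

lemma G_mem: "{x, y} \<in> Gset n \<longleftrightarrow> SE n x y \<or> SF n x y"
proof
  assume "{x, y} \<in> Gset n"
  then obtain x' y' where e: "{x,y} = {x',y'}" and s: "SE n x' y' \<or> SF n x' y'"
    unfolding Gset_def by blast
  from e have "(x = x' \<and> y = y') \<or> (x = y' \<and> y = x')" by (simp add: doubleton_eq_iff)
  then show "SE n x y \<or> SF n x y" using s unfolding SE_def SF_def by blast
next
  assume "SE n x y \<or> SF n x y"
  then show "{x, y} \<in> Gset n" unfolding Gset_def by blast
qed

lemma E_sub: "grid_E n \<subseteq> Gset n"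
proof
  fix e assume "e \<in> grid_E n"
  then obtain x y where "e = {x,y}" unfolding grid_E_def by blast
  then show "e \<in> Gset n" using `e \<in> grid_E n` E_mem G_mem by blast
qed

lemma closed:
  assumes "rowwise u > rowwise (a,b)" "rowwise v > rowwise (a,b)" "u \<noteq> v"
    "SE n (a,b) u \<or> SF n (a,b) u" "SE n (a,b) v \<or> SF n (a,b) v"
  shows "SE n u v \<or> SF n u v"
  using up_nbrs[OF assms(4,1)] up_nbrs[OF assms(5,2)] assms(3)
  apply (elim conjE disjE)
  apply (simp_all add: SE_def SF_def RE_def RF_def)
  apply arith+
  done

lemma seq_sub: "fill_seq (grid_V n) rowwise (grid_E n) k \<subseteq> Gset n"
proof (induction k)
  case 0
  then show ?case using E_sub by simp
next
  case (Suc k)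
  let ?E = "fill_seq (grid_V n) rowwise (grid_E n) k"
  have "e \<in> Gset n" if "e \<in> fill_step (grid_V n) rowwise ?E (Suc k)" for e
  proof -
    from that consider "e \<in> ?E" | u v w where "e = {u,v}" "u \<noteq> v" "rowwise u > Suc k"
      "rowwise v > Suc k" "rowwise w = Suc k" "{u,w} \<in> ?E" "{v,w} \<in> ?E"
      unfolding fill_step_def by blast
    then show ?thesis
    proof cases
      case 1 then show ?thesis using Suc.IH by blast
    next
      case 2
      obtain a b where w: "w = (a,b)" by force
      have "{w,u} \<in> Gset n" "{w,v} \<in> Gset n" using 2 Suc.IH by (auto simp: insert_commute)
      then have "SE n (a,b) u \<or> SF n (a,b) u" "SE n (a,b) v \<or> SF n (a,b) v"
        using G_mem w by auto
      then have "SE n u v \<or> SF n u v" using closed[of a b u v n] 2 w by auto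
      then show ?thesis using 2 G_mem by auto
    qed
  qed
  then show ?case by auto
qed

lemma D_sub: "D_fill (grid_V n) rowwise (grid_E n) \<subseteq> Gset n"
  unfolding D_fill_def using seq_sub by blast

lemma no_tri: "SF n u v \<Longrightarrow> SF n v w \<Longrightarrow> SF n u w \<Longrightarrow> False"
proof -
  assume a: "SF n u v" "SF n v w" "SF n u w"
  obtain a b where u: "u = (a,b)" by force
  obtain c d where v: "v = (c,d)" by force
  obtain e f where w: "w = (e,f)" by force
  show False using a unfolding u v w SF_def RF_def
    apply (elim disjE conjE)
    apply simp_all
    done
qed

lemma fill_only: "{u,v} \<notin> grid_E n \<Longrightarrow> {u,v} \<in> D_fill (grid_V n) rowwise (grid_E n) \<Longrightarrow> SF n u v"
  using D_sub E_mem G_mem by blast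

lemma rw_inj:
  assumes "3 * (x - Suc 0) + y = 3 * (xa - Suc 0) + (ya::nat)" "Suc 0 \<le> x" "Suc 0 \<le> xa"
    "Suc 0 \<le> y" "y \<le> 3" "Suc 0 \<le> ya" "ya \<le> 3"
  shows "x = xa \<and> y = ya"
proof -
  have "y = 1 \<or> y = 2 \<or> y = 3" "ya = 1 \<or> ya = 2 \<or> ya = 3" using assms by auto
  then show ?thesis using assms by (elim disjE; presburger)
qed

lemma bij: "bij_betw rowwise (grid_V n) {1..card (grid_V n)}"
proof -
  have c: "card (grid_V n) = 3 * n" unfolding grid_V_def by (simp add: card_cartesian_product)
  have "inj_on rowwise (grid_V n)"
    unfolding inj_on_def grid_V_def rowwise_def by (auto dest: rw_inj)
  moreover have "rowwise ` grid_V n = {1..3*n}"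
  proof
    show "rowwise ` grid_V n \<subseteq> {1..3*n}" unfolding grid_V_def rowwise_def by auto
  next
    show "{1..3*n} \<subseteq> rowwise ` grid_V n"
    proof
      fix k assume k: "k \<in> {1..3*n}"
      let ?x = "((k - 1) div 3 + 1, (k - 1) mod 3 + 1)"
      have "?x \<in> grid_V n" using k unfolding grid_V_def by auto
      moreover have "rowwise ?x = k" using k unfolding rowwise_def by auto
      ultimately show "k \<in> rowwise ` grid_V n" by force
    qed
  qed
  ultimately show ?thesis unfolding bij_betw_def c by simp
qed

theorem lemma10:
  fixes n :: nat
  assumes "n \<ge> 1"
  shows "GB_ordering (grid_V n) (grid_E n) rowwise"
  unfolding GB_ordering_def using bij fill_only no_tri by blast

end
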